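(* Let $(\Sigma_+,\Sigma_-,N_1,N_2,N_3)$ be a solution of the Wainwright–Hsu system satisfying the constraint, with $N_1<0$ and $N_2,N_3>0$. Then for every $\epsilon>0$ there is $T$ such that $\Sigma_+(\tau)\leq\frac12+\epsilon$ for all $\tau\geq T$.
   Context: Wainwright–Hsu system: for functions $N_1,N_2,N_3,\Sigma_+,\Sigma_-$ of $\tau\in\mathbb{R}$ (prime denotes $d/d\tau$), $N_1'=(q-4\Sigma_+)N_1$, $N_2'=(q+2\Sigma_++2\sqrt3\Sigma_-)N_2$, $N_3'=(q+2\Sigma_+-2\sqrt3\Sigma_-)N_3$, $\Sigma_+'=-(2-q)\Sigma_+-3S_+$, $\Sigma_-'=-(2-q)\Sigma_--3S_-$, where $q=2(\Sigma_+^2+\Sigma_-^2)$, $S_+=\frac12[(N_2-N_3)^2-N_1(2N_1-N_2-N_3)]$, $S_-=\frac{\sqrt3}{2}(N_3-N_2)(N_1-N_2-N_3)$, together with the constraint $\Sigma_+^2+\Sigma_-^2+\frac34[N_1^2+N_2^2+N_3^2-2(N_1N_2+N_2N_3+N_1N_3)]=1$. Solutions with these sign conditions exist for all $\tau\in\mathbb{R}$. *)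

theory Defs
  imports "HOL-Analysis.Analysis"
begin

definition wh_q :: "real \<Rightarrow> real \<Rightarrow> real" where
  "wh_q sp sm = 2 * (sp^2 + sm^2)"

definition wh_Sp :: "real \<Rightarrow> real \<Rightarrow> real \<Rightarrow> real" where
  "wh_Sp n1 n2 n3 = (1/2) * ((n2 - n3)^2 - n1 * (2*n1 - n2 - n3))"

definition wh_Sm :: "real \<Rightarrow> real \<Rightarrow> real \<Rightarrow> real" where
  "wh_Sm n1 n2 n3 = (sqrt 3 / 2) * (n3 - n2) * (n1 - n2 - n3)"

definition wh_solution ::
  "(real \<Rightarrow> real) \<Rightarrow> (real \<Rightarrow> real) \<Rightarrow> (real \<Rightarrow> real) \<Rightarrow> (real \<Rightarrow> real) \<Rightarrow> (real \<Rightarrow> real) \<Rightarrow> bool"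
where
  "wh_solution N1 N2 N3 Sp Sm \<longleftrightarrow>
    (\<forall>t. (N1 has_real_derivative ((wh_q (Sp t) (Sm t) - 4 * Sp t) * N1 t)) (at t) \<and>
         (N2 has_real_derivative ((wh_q (Sp t) (Sm t) + 2 * Sp t + 2 * sqrt 3 * Sm t) * N2 t)) (at t) \<and>
         (N3 has_real_derivative ((wh_q (Sp t) (Sm t) + 2 * Sp t - 2 * sqrt 3 * Sm t) * N3 t)) (at t) \<and>
         (Sp has_real_derivative (- (2 - wh_q (Sp t) (Sm t)) * Sp t - 3 * wh_Sp (N1 t) (N2 t) (N3 t))) (at t) \<and>
         (Sm has_real_derivative (- (2 - wh_q (Sp t) (Sm t)) * Sm t - 3 * wh_Sm (N1 t) (N2 t) (N3 t))) (at t) \<and>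
         (Sp t)^2 + (Sm t)^2 + (3/4) * ((N1 t)^2 + (N2 t)^2 + (N3 t)^2
            - 2 * (N1 t * N2 t + N2 t * N3 t + N1 t * N3 t)) = 1)"

end

theory Submission
  imports Defs
begin

lemma L9: fixes X Y Z :: real assumes "0 \<le> X" "X \<le> 8/3" "0 \<le> Y" "Y \<le> 4" "-2 \<le> Z" "Z \<le> 2/3"
 shows "\<bar>-(3/2)*(X - Y + Z)\<bar> \<le> 9" using assms by (simp add: abs_le_iff algebra_simps)

lemma pt:
  fixes n1 n2 n3 u v :: real
  assumes c: "u^2 + v^2 + 3/4*(n1^2+n2^2+n3^2 - 2*(n1*n2+n2*n3+n1*n3)) = 1"
    and h: "n1<0" "n2>0" "n3>0"
  shows "-1 \<le> u" "u \<le> 1" "(-n1)*(n2+n3) \<le> 2/3" "(n2-n3)^2 \<le> 4/3" "n1^2 \<le> 4/3"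
    "n1^2*n2*n3 \<le> 1/9" "6*(n1^2*n2*n3) \<le> (-n1)*(n2+n3)"
    "-(2 - wh_q u v) * u - 3*wh_Sp n1 n2 n3 =
      -(3/2)*((1+u)*(n2-n3)^2 - (2-u)*n1^2 + (2*u-1)*((-n1)*(n2+n3)))"
    "\<bar>-(2 - wh_q u v) * u - 3*wh_Sp n1 n2 n3\<bar> \<le> 9"
proof -
  have K: "n1^2+n2^2+n3^2 - 2*(n1*n2+n2*n3+n1*n3) = (n2-n3)^2 + n1^2 + 2*((-n1)*(n2+n3))"
    by (simp add: algebra_simps power2_eq_square)
  have as: "(-n1)*(n2+n3) > 0" using h by (simp add: mult_neg_pos)
  have p1: "(n2-n3)^2 \<ge> 0" "n1^2 \<ge> 0" "u^2 \<ge> 0" "v^2 \<ge> 0" by simp_all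
  define A where "A = (-n1)*(n2+n3)"
  define B where "B = (n2-n3)^2"
  define C where "C = n1^2"
  have "u^2 + v^2 + (3/4)*B + (3/4)*C + (3/2)*A = u^2 + v^2 + 3/4*(n1^2+n2^2+n3^2 - 2*(n1*n2+n2*n3+n1*n3))"
    unfolding A_def B_def C_def by (simp add: power2_eq_square algebra_simps)
  hence cc: "u^2 + v^2 + (3/4)*B + (3/4)*C + (3/2)*A = 1" using c by argo
  have pp: "A > 0" "B \<ge> 0" "C \<ge> 0" using as unfolding A_def B_def C_def by simp_all
  have sq: "u^2 + v^2 \<le> 1" using cc pp p1 by linarith
  have "u^2 \<le> 1" using sq p1 by linarith
  hence "\<bar>u\<bar> \<le> 1" by (simp add: abs_square_le_1)
  thus "-1 \<le> u" "u \<le> 1" by auto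
  show a1: "(-n1)*(n2+n3) \<le> 2/3" "(n2-n3)^2 \<le> 4/3" "n1^2 \<le> 4/3"
    using cc pp p1 unfolding A_def B_def C_def by linarith+
  have "(n2+n3)^2 - 4*(n2*n3) = (n2-n3)^2" by (simp add: power2_eq_square algebra_simps)
  hence "4*(n2*n3) \<le> (n2+n3)^2" using p1 by linarith
  hence "n1^2*(4*(n2*n3)) \<le> n1^2*(n2+n3)^2" by (simp add: mult_left_mono)
  also have "\<dots> = ((-n1)*(n2+n3))^2" by (simp add: power_mult_distrib)
  also have "\<dots> \<le> (2/3)^2" using a1(1) as by (intro power_mono) auto
  finally have W19: "n1^2*n2*n3 \<le> 1/9" by (simp add: power2_eq_square algebra_simps)
  show "n1^2*n2*n3 \<le> 1/9" by (rule W19)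
  have "n1^2*(4*(n2*n3)) \<le> A^2" using \<open>n1^2*(4*(n2*n3)) \<le> n1^2*(n2+n3)^2\<close>
    by (simp add: A_def power_mult_distrib)
  moreover have "A^2 \<le> (2/3)*A" unfolding power2_eq_square
    using mult_right_mono[OF a1(1)[folded A_def], of A] pp by simp
  ultimately show "6*(n1^2*n2*n3) \<le> (-n1)*(n2+n3)" unfolding A_def by simp
  have q: "wh_q u v = 2 - (3/2)*B - (3/2)*C - 3*A"
  proof -
    have "wh_q u v = 2 * u^2 + 2 * v^2" by (simp add: wh_q_def)
    thus ?thesis using cc by linarith
  qed
  show F: "-(2 - wh_q u v) * u - 3*wh_Sp n1 n2 n3 =
      -(3/2)*((1+u)*(n2-n3)^2 - (2-u)*n1^2 + (2*u-1)*((-n1)*(n2+n3)))"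
    unfolding q wh_Sp_def A_def B_def C_def by (simp add: algebra_simps power2_eq_square)
  have B43: "B \<le> 4/3" "C \<le> 4/3" "A \<le> 2/3" using a1 B_def C_def A_def by simp_all
  have b1: "0 \<le> (1+u)*B" using pp \<open>-1 \<le> u\<close> by simp
  have b1': "(1+u)*B \<le> 2*(4/3)" by (rule mult_mono) (use pp B43 \<open>u \<le> 1\<close> in auto)
  have b2: "0 \<le> (2-u)*C" using pp \<open>u \<le> 1\<close> by simp
  have b2': "(2-u)*C \<le> 3*(4/3)" by (rule mult_mono) (use pp B43 \<open>-1 \<le> u\<close> in auto)
  have b3: "(2*u-1)*A \<le> 1*(2/3)" by (rule mult_mono) (use pp B43 \<open>u \<le> 1\<close> in auto)
  have b4: "-3*(2/3) \<le> (2*u-1)*A"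
  proof -
    have "(-3)*A \<le> (2*u-1)*A" using pp \<open>-1 \<le> u\<close> by (intro mult_right_mono) auto
    moreover have "-3*(2/3) \<le> (-3)*A" using B43 by linarith
    ultimately show ?thesis by linarith
  qed
  show "\<bar>-(2 - wh_q u v) * u - 3*wh_Sp n1 n2 n3\<bar> \<le> 9"
    unfolding F A_def[symmetric] B_def[symmetric] C_def[symmetric]
    by (rule L9) (use b1 b2 b3 b4 b1' b2' in auto)
qed

lemma L10: fixes X Y Z C A e :: real assumes "0 \<le> X" "Y \<le> (3/4)*(e*A)" "Z \<ge> 2*(e*A)" "e*A \<ge> 0"
 shows "-(3/2)*(X - Y + Z) \<le> -(e*A)" using assms by (simp add: algebra_simps)

lemma pt2:
  fixes n1 n2 n3 u v e :: real
  assumes c: "u^2 + v^2 + 3/4*(n1^2+n2^2+n3^2 - 2*(n1*n2+n2*n3+n1*n3)) = 1"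
    and h: "n1<0" "n2>0" "n3>0" and e: "e > 0" "u \<ge> 1/2 + e" and sm: "-n1 \<le> (e/2)*(n2+n3)"
  shows "-(2 - wh_q u v) * u - 3*wh_Sp n1 n2 n3 \<le> -e*((-n1)*(n2+n3))"
proof -
  note P = pt[OF c h]
  define A where "A = (-n1)*(n2+n3)"
  have A0: "A > 0" using h unfolding A_def by (simp add: mult_neg_pos)
  have X: "0 \<le> (1+u)*(n2-n3)^2" using e P(1) by simp
  have "n1^2 = (-n1)*(-n1)" by (simp add: power2_eq_square)
  also have "\<dots> \<le> (-n1)*((e/2)*(n2+n3))" using sm h by (intro mult_left_mono) auto
  also have "\<dots> = (1/2)*(e*A)" unfolding A_def by (simp add: field_simps)
  finally have C1: "n1^2 \<le> (1/2)*(e*A)" .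
  have "(2-u)*n1^2 \<le> (3/2)*n1^2" using e by (intro mult_right_mono) auto
  hence Y: "(2-u)*n1^2 \<le> (3/4)*(e*A)" using C1 by linarith
  have "(2*e)*A \<le> (2*u-1)*A" using e A0 by (intro mult_right_mono) auto
  hence Z: "(2*u-1)*A \<ge> 2*(e*A)" by simp
  have eA: "e*A \<ge> 0" using e A0 by simp
  have F: "-(2 - wh_q u v) * u - 3*wh_Sp n1 n2 n3 = -(3/2)*((1+u)*(n2-n3)^2 - (2-u)*n1^2 + (2*u-1)*A)"
    using P(8) unfolding A_def .
  have E: "-e*((-n1)*(n2+n3)) = -(e*A)" by (simp add: A_def)
  show ?thesis using F E L10[OF X Y Z eA] by linarith
qed

lemma pt4:
  fixes n1 n2 n3 u v d M :: real
  assumes c: "u^2 + v^2 + 3/4*(n1^2+n2^2+n3^2 - 2*(n1*n2+n2*n3+n1*n3)) = 1"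
    and h: "n1<0" "n2>0" "n3>0" and d: "d > 0" "M \<ge> 1" "M \<ge> 1/d" and V: "-(n1*n2*n3) \<ge> M"
  shows "-n1 \<le> d*(n2+n3)"
proof -
  note P = pt[OF c h]
  define W where "W = n1^2*n2*n3"
  define a where "a = -n1"
  define s where "s = n2+n3"
  have a0: "a > 0" "s > 0" using h a_def s_def by auto
  have W0: "0 \<le> W" "W \<le> 1/9" using P(6) h W_def by auto
  have V': "a*(n2*n3) \<ge> M" using V a_def by simp
  have ps: "n2*n3 \<le> s^2/4" proof -
    have "s^2 - 4*(n2*n3) = (n2-n3)^2" unfolding s_def by (simp add: power2_eq_square algebra_simps)
    moreover have "(n2-n3)^2 \<ge> 0" by simp
    ultimately show ?thesis by linarith
  qed
  have key: "a^2 * (a*(n2*n3))^4 = W^3 * (n2*n3)" unfolding W_def a_def by (simp add: power_def algebra_simps)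
  have "M^4 \<le> (a*(n2*n3))^4" using V' d by (intro power_mono) auto
  hence "a^2 * M^4 \<le> a^2 * (a*(n2*n3))^4" by (simp add: mult_left_mono)
  also have "\<dots> = W^3 * (n2*n3)" by (rule key)
  also have "\<dots> \<le> (1/9)^3 * (s^2/4)" using W0 ps h by (intro mult_mono power_mono) auto
  also have "\<dots> \<le> s^2"
  proof -
    have e9: "(1/9::real)^3 = 1/729" by (simp add: power3_eq_cube)
    have "s^2 \<ge> 0" by simp
    thus ?thesis unfolding e9 by linarith
  qed
  finally have i1: "a^2 * M^4 \<le> s^2" .
  have "1/d \<le> M" using d by simp
  hence "(1/d)^2 \<le> M^2" using d by (intro power_mono) auto
  also have "M^2 \<le> M^4" using d by (simp add: power_increasing)
  finally have "(1/d)^2 \<le> M^4" .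
  hence "a^2 * (1/d)^2 \<le> a^2 * M^4" by (simp add: mult_left_mono)
  hence "a^2 * (1/d)^2 \<le> s^2" using i1 by linarith
  hence "(a/d)^2 \<le> s^2" by (simp add: power_divide)
  hence "a/d \<le> s" using a0 d by (simp add: power2_le_iff_abs_le)
  hence "a \<le> s * d" using d by (simp add: divide_le_eq)
  thus ?thesis unfolding a_def s_def by (simp add: mult.commute)
qed

lemma no_upcross:
  fixes g g' :: "real \<Rightarrow> real" and c T1 \<tau>1 :: real
  assumes der: "\<And>t. (g has_real_derivative g' t) (at t)"
    and neg: "\<And>t. t \<ge> T1 \<Longrightarrow> g t \<ge> c \<Longrightarrow> g' t < 0"
    and t1: "\<tau>1 \<ge> T1" "g \<tau>1 \<le> c"
  shows "\<forall>\<tau>\<ge>\<tau>1. g \<tau> \<le> c"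
proof (intro allI impI, rule ccontr)
  fix \<tau> assume \<tau>: "\<tau> \<ge> \<tau>1" "\<not> g \<tau> \<le> c"
  let ?S = "{\<tau>1..\<tau>} \<inter> {t. g t \<le> c}"
  have cont: "continuous_on UNIV g" using der
    by (meson DERIV_isCont continuous_at_imp_continuous_on)
  have "closed {t. g t \<le> c}" using cont by (intro closed_Collect_le) (auto intro: continuous_on_const)
  hence "compact ?S" by (intro compact_Int_closed) auto
  moreover have "?S \<noteq> {}" using \<tau> t1 by auto
  ultimately obtain s where s: "s \<in> ?S" "\<forall>t\<in>?S. t \<le> s" using compact_attains_sup by metis
  have "s \<le> \<tau>" using s by auto
  moreover have "s \<noteq> \<tau>" using s \<tau> by auto
  ultimately have st: "s < \<tau>" by simp
  obtain z where z: "s < z" "z < \<tau>" "g \<tau> - g s = (\<tau> - s) * g' z"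
    using MVT2[OF st, of g g'] der by blast
  show False
  proof (cases "g z \<ge> c")
    case True then have "g' z < 0" using neg z s t1 by auto
    then have "g \<tau> - g s < 0" using z by (simp add: mult_pos_neg)
    thus False using s \<tau> by auto
  next
    case False then have "z \<in> ?S" using z s by auto
    hence "z \<le> s" using s(2) by blast
    thus False using z by simp
  qed
qed

theorem mainTheorem14:
  fixes N1 N2 N3 Sp Sm :: "real \<Rightarrow> real"
  assumes "wh_solution N1 N2 N3 Sp Sm"
    and "\<forall>t. N1 t < 0 \<and> N2 t > 0 \<and> N3 t > 0"
  shows "\<forall>\<epsilon>>0. \<exists>T. \<forall>\<tau>\<ge>T. Sp \<tau> \<le> 1/2 + \<epsilon>"
proof -
  define q where "q t = wh_q (Sp t) (Sm t)" for t
  define sp' where "sp' t = - (2 - wh_q (Sp t) (Sm t)) * Sp t - 3 * wh_Sp (N1 t) (N2 t) (N3 t)" for t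
  have D1: "\<And>t. (N1 has_real_derivative ((q t - 4 * Sp t) * N1 t)) (at t)"
    and D2: "\<And>t. (N2 has_real_derivative ((q t + 2 * Sp t + 2 * sqrt 3 * Sm t) * N2 t)) (at t)"
    and D3: "\<And>t. (N3 has_real_derivative ((q t + 2 * Sp t - 2 * sqrt 3 * Sm t) * N3 t)) (at t)"
    and DS: "\<And>t. (Sp has_real_derivative sp' t) (at t)"
    and C: "\<And>t. (Sp t)^2 + (Sm t)^2 + 3/4*((N1 t)^2+(N2 t)^2+(N3 t)^2
            - 2*(N1 t * N2 t + N2 t * N3 t + N1 t * N3 t)) = 1"
    using assms(1) unfolding wh_solution_def q_def sp'_def by auto
  have pos: "\<And>t. N1 t < 0" "\<And>t. N2 t > 0" "\<And>t. N3 t > 0" using assms(2) by auto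
  note P = pt[OF C pos(1) pos(2) pos(3)]
  have q2: "\<And>t. q t \<ge> 2 * (Sp t)^2" unfolding q_def wh_q_def by simp
  have q0: "\<And>t. q t \<ge> 0" unfolding q_def wh_q_def by simp
  have sp'b: "\<And>t. \<bar>sp' t\<bar> \<le> 9" unfolding sp'_def using P(9) .
  define V where "V t = -(N1 t * N2 t * N3 t)" for t
  have V0: "\<And>t. V t > 0" unfolding V_def using pos
    by (simp add: mult_neg_pos mult_pos_pos)
  have dV: "\<And>t. (V has_real_derivative (3 * q t * V t)) (at t)"
  proof -
    fix t
    have "((\<lambda>t. N1 t * N2 t * N3 t) has_real_derivative
       (((q t - 4 * Sp t) * N1 t) * N2 t + ((q t + 2 * Sp t + 2 * sqrt 3 * Sm t) * N2 t) * N1 t) * N3 t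
        + ((q t + 2 * Sp t - 2 * sqrt 3 * Sm t) * N3 t) * (N1 t * N2 t)) (at t)"
      by (intro DERIV_mult D1 D2 D3)
    hence "((\<lambda>t. - (N1 t * N2 t * N3 t)) has_real_derivative
       - ((((q t - 4 * Sp t) * N1 t) * N2 t + ((q t + 2 * Sp t + 2 * sqrt 3 * Sm t) * N2 t) * N1 t) * N3 t
        + ((q t + 2 * Sp t - 2 * sqrt 3 * Sm t) * N3 t) * (N1 t * N2 t))) (at t)"
      by (rule DERIV_minus)
    moreover have "- ((((q t - 4 * Sp t) * N1 t) * N2 t + ((q t + 2 * Sp t + 2 * sqrt 3 * Sm t) * N2 t) * N1 t) * N3 t
        + ((q t + 2 * Sp t - 2 * sqrt 3 * Sm t) * N3 t) * (N1 t * N2 t)) = 3 * q t * V t"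
      unfolding V_def by (simp add: algebra_simps)
    ultimately have dd: "((\<lambda>t. - (N1 t * N2 t * N3 t)) has_real_derivative 3 * q t * V t) (at t)"
      by (rule DERIV_cong)
    have Veq: "(\<lambda>t. - (N1 t * N2 t * N3 t)) = V" unfolding V_def by auto
    show "(V has_real_derivative (3 * q t * V t)) (at t)" using dd unfolding Veq .
  qed
  define W where "W t = (N1 t)^2 * N2 t * N3 t" for t
  have dW: "\<And>t. (W has_real_derivative (4 * (q t - Sp t) * W t)) (at t)"
  proof -
    fix t
    have "((\<lambda>t. N1 t * N1 t * N2 t * N3 t) has_real_derivative
       ((((q t - 4 * Sp t) * N1 t) * N1 t + ((q t - 4 * Sp t) * N1 t) * N1 t) * N2 t
         + ((q t + 2 * Sp t + 2 * sqrt 3 * Sm t) * N2 t) * (N1 t * N1 t)) * N3 t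
        + ((q t + 2 * Sp t - 2 * sqrt 3 * Sm t) * N3 t) * (N1 t * N1 t * N2 t)) (at t)"
      by (intro DERIV_mult D1 D2 D3)
    moreover have "((((q t - 4 * Sp t) * N1 t) * N1 t + ((q t - 4 * Sp t) * N1 t) * N1 t) * N2 t
         + ((q t + 2 * Sp t + 2 * sqrt 3 * Sm t) * N2 t) * (N1 t * N1 t)) * N3 t
        + ((q t + 2 * Sp t - 2 * sqrt 3 * Sm t) * N3 t) * (N1 t * N1 t * N2 t) = 4 * (q t - Sp t) * W t"
      unfolding W_def by (simp add: power2_eq_square algebra_simps)
    ultimately have dd: "((\<lambda>t. N1 t * N1 t * N2 t * N3 t) has_real_derivative 4 * (q t - Sp t) * W t) (at t)"
      by (rule DERIV_cong)
    have Weq: "(\<lambda>t. N1 t * N1 t * N2 t * N3 t) = W" unfolding W_def by (auto simp: power2_eq_square)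
    show "(W has_real_derivative (4 * (q t - Sp t) * W t)) (at t)" using dd unfolding Weq .
  qed
  have Vmono: "\<And>x y. x \<le> y \<Longrightarrow> V x \<le> V y"
  proof -
    fix x y :: real assume "x \<le> y"
    thus "V x \<le> V y"
    proof (rule DERIV_nonneg_imp_nondecreasing)
      fix z show "\<exists>y. (V has_real_derivative y) (at z) \<and> 0 \<le> y"
        using dV[of z] q0[of z] V0[of z] by (intro exI[of _ "3 * q z * V z"]) simp
    qed
  qed
  show ?thesis
  proof (intro allI impI)
    fix e :: real assume e: "e > 0"
    show "\<exists>T. \<forall>\<tau>\<ge>T. Sp \<tau> \<le> 1/2 + e"
    proof (rule ccontr)
      assume H0: "\<not> (\<exists>T. \<forall>\<tau>\<ge>T. Sp \<tau> \<le> 1/2 + e)"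
      hence H: "\<And>T. \<exists>\<tau>\<ge>T. Sp \<tau> > 1/2 + e" by (meson not_le)
      define h where "h = e/9"
      have h0: "h > 0" using e h_def by simp
      have B1: "Sp t \<ge> 1/2" if "Sp \<tau> > 1/2 + e" "\<tau> - h \<le> t" "t \<le> \<tau>" for \<tau> t
      proof (cases "t = \<tau>")
        case True thus ?thesis using that e by simp
      next
        case False
        hence tt: "t < \<tau>" using that by simp
        obtain z where z: "t < z" "z < \<tau>" "Sp \<tau> - Sp t = (\<tau> - t) * sp' z"
          using MVT2[OF tt, of Sp sp'] DS by blast
        have "(\<tau> - t) * sp' z \<le> (\<tau> - t) * 9" using sp'b[of z] tt
          by (intro mult_left_mono) auto
        also have "\<dots> \<le> h * 9" using that by simp
        finally show ?thesis using z that h_def by simp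
      qed
      define c where "c = (3/2) * h"
      have c0: "c > 0" using h0 c_def by simp
      have B3: "V \<tau> \<ge> (1 + c) * V (\<tau> - h)" if "Sp \<tau> > 1/2 + e" for \<tau>
      proof -
        define u where "u t = V t - (3/2) * V (\<tau> - h) * t" for t
        have du: "(u has_real_derivative (3 * q t * V t - (3/2) * V (\<tau> - h))) (at t)" for t
        proof -
          have "((\<lambda>t. V t - (3/2) * V (\<tau> - h) * t) has_real_derivative
            (3 * q t * V t - (3/2) * V (\<tau> - h) * 1)) (at t)"
            by (intro DERIV_diff dV DERIV_cmult DERIV_ident)
          moreover have "(\<lambda>t. V t - (3/2) * V (\<tau> - h) * t) = u" unfolding u_def by auto
          ultimately show ?thesis by simp
        qed
        have tt: "\<tau> - h < \<tau>" using h0 by simp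
        obtain z where z: "\<tau> - h < z" "z < \<tau>"
          "u \<tau> - u (\<tau> - h) = (\<tau> - (\<tau> - h)) * (3 * q z * V z - (3/2) * V (\<tau> - h))"
          using MVT2[OF tt, of u "\<lambda>t. 3 * q t * V t - (3/2) * V (\<tau> - h)"] du by blast
        have "Sp z \<ge> 1/2" using B1[OF that, of z] z by simp
        hence "(Sp z)^2 \<ge> (1/2)^2" by (intro power_mono) auto
        hence qz: "q z \<ge> 1/2" using q2[of z] by (simp add: power2_eq_square)
        have Vz: "V z \<ge> V (\<tau> - h)" using Vmono z by simp
        have "3 * q z * V z \<ge> 3 * (1/2) * V z" using qz V0[of z] by (intro mult_right_mono) auto
        hence "3 * q z * V z - (3/2) * V (\<tau> - h) \<ge> 0" using Vz by simp
        hence "u \<tau> - u (\<tau> - h) \<ge> 0" using z h0 by simp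
        thus ?thesis unfolding u_def c_def by (simp add: field_simps)
      qed
      have B4: "\<exists>t. V t \<ge> V 0 * (1 + c)^n" for n
      proof (induction n)
        case 0 show ?case by (intro exI[of _ 0]) simp
      next
        case (Suc n)
        then obtain t where t: "V t \<ge> V 0 * (1 + c)^n" by blast
        obtain \<tau> where \<tau>: "\<tau> \<ge> t + h" "Sp \<tau> > 1/2 + e" using H[of "t + h"] by blast
        have "V 0 * (1 + c)^Suc n = (1 + c) * (V 0 * (1 + c)^n)" by simp
        also have "\<dots> \<le> (1 + c) * V t" using t c0 by (intro mult_left_mono) auto
        also have "\<dots> \<le> (1 + c) * V (\<tau> - h)" using Vmono[of t "\<tau> - h"] \<tau> c0
          by (intro mult_left_mono) auto
        also have "\<dots> \<le> V \<tau>" using B3[OF \<tau>(2)] .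
        finally show ?case by blast
      qed
      have B5: "\<exists>T. \<forall>t\<ge>T. V t \<ge> M" for M
      proof -
        obtain n where n: "M / V 0 < (1 + c)^n" using real_arch_pow[of "1 + c" "M / V 0"] c0 by auto
        hence "M < V 0 * (1 + c)^n" using V0[of 0] by (simp add: divide_less_eq mult.commute)
        moreover obtain t where "V t \<ge> V 0 * (1 + c)^n" using B4 by blast
        ultimately show ?thesis using Vmono by (meson less_le_trans less_imp_le order_trans)
      qed
      define M where "M = max 1 (1/(e/2))"
      obtain T1 where T1: "\<And>t. t \<ge> T1 \<Longrightarrow> V t \<ge> M" using B5[of M] by blast
      have small: "-N1 t \<le> (e/2)*(N2 t + N3 t)" if "t \<ge> T1" for t
        using pt4[OF C pos(1) pos(2) pos(3), of "e/2" M] e T1[OF that] unfolding M_def V_def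
        by auto
      have neg: "sp' t \<le> -e*((-N1 t)*(N2 t + N3 t))" if "t \<ge> T1" "Sp t \<ge> 1/2 + e" for t
        unfolding sp'_def using pt2[OF C pos(1) pos(2) pos(3) e that(2) small[OF that(1)]] .
      have Apos: "(-N1 t)*(N2 t + N3 t) > 0" for t using pos[of t] by (simp add: mult_neg_pos)
      have neg': "sp' t < 0" if "t \<ge> T1" "Sp t \<ge> 1/2 + e" for t
      proof -
        have "e*((-N1 t)*(N2 t + N3 t)) > 0" using mult_pos_pos[OF e Apos[of t]] .
        thus ?thesis using neg[OF that] by linarith
      qed
      have A1: "\<exists>\<tau>1\<ge>T1. Sp \<tau>1 \<le> 1/2 + e"
      proof (rule ccontr)
        assume "\<not> (\<exists>\<tau>1\<ge>T1. Sp \<tau>1 \<le> 1/2 + e)"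
        hence G: "\<And>t. t \<ge> T1 \<Longrightarrow> Sp t > 1/2 + e" by (meson not_le)
        have Wmono: "W T1 \<le> W t" if "T1 \<le> t" for t
          using that
        proof (rule DERIV_nonneg_imp_nondecreasing)
          fix z assume z: "T1 \<le> z" "z \<le> t"
          have S: "Sp z > 1/2" using G[of z] z e by simp
          have "Sp z * Sp z \<ge> Sp z * (1/2)" using S by (intro mult_left_mono) auto
          hence "q z - Sp z \<ge> 0" using q2[of z] by (simp add: power2_eq_square)
          moreover have "W z \<ge> 0" unfolding W_def using pos[of z] by simp
          ultimately show "\<exists>y. (W has_real_derivative y) (at z) \<and> 0 \<le> y"
            using dW[of z] by (intro exI[of _ "4 * (q z - Sp z) * W z"]) simp
        qed
        have WT: "W T1 > 0" unfolding W_def using pos[of T1] by simp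
        define k where "k = 6 * e * W T1"
        have k0: "k > 0" using WT e k_def by simp
        have spk: "sp' t \<le> -k" if "t \<ge> T1" for t
        proof -
          have "6 * W t \<le> (-N1 t)*(N2 t + N3 t)" using P(7)[of t] unfolding W_def by simp
          hence "e * (6 * W T1) \<le> e * ((-N1 t)*(N2 t + N3 t))"
            using Wmono[OF that] e by (intro mult_left_mono) auto
          thus ?thesis using neg[OF that] G[OF that] k_def by simp
        qed
        define L where "L = 3 / k"
        have L0: "L > 0" using k0 L_def by simp
        have tt: "T1 < T1 + L" using L0 by simp
        obtain z where z: "T1 < z" "z < T1 + L" "Sp (T1 + L) - Sp T1 = (T1 + L - T1) * sp' z"
          using MVT2[OF tt, of Sp sp'] DS by blast
        have "(T1 + L - T1) * sp' z \<le> L * (-k)" using mult_left_mono[OF spk[of z], of L] z L0 by simp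
        also have "\<dots> = -3" using k0 L_def by simp
        finally have "Sp (T1 + L) \<le> Sp T1 - 3" using z by simp
        thus False using P(1)[of "T1 + L"] P(2)[of T1] by simp
      qed
      then obtain \<tau>1 where \<tau>1: "\<tau>1 \<ge> T1" "Sp \<tau>1 \<le> 1/2 + e" by blast
      have "\<forall>\<tau>\<ge>\<tau>1. Sp \<tau> \<le> 1/2 + e"
        by (rule no_upcross[OF DS neg' \<tau>1])
      thus False using H0 by blast
    qed
  qed
qed

end
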